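(* Let $X\in\mathbb{R}^{m\times n}$ be fixed with rows $x^\alpha$, $V=\frac1nXX^\top$, let $W^K,W^Q\in\mathbb{R}^{n\times n_k}$ have i.i.d. $\mathcal N(0,1)$ entries, and $Y=\frac1nXW^KW^{Q,\top}X^\top$. Define $\overline{Y^\alpha}=\frac1m\sum_\nu Y^{\alpha\nu}$, $\overline{(Y^\alpha)^2}=\frac1m\sum_\nu(Y^{\alpha\nu})^2$, and $$S_1^{\alpha\delta,\beta\omega}=\frac1{n_k}\mathbb{E}\big[(Y^{\alpha\delta}-\overline{Y^\alpha})(Y^{\beta\omega}-\overline{Y^\beta})\big],\qquad S_2^{\alpha\delta}=\frac1{n_k}\mathbb{E}\Big[(Y^{\alpha\delta}-\overline{Y^\alpha})^2-\big(\overline{(Y^\alpha)^2}-\overline{Y^\alpha}^2\big)\Big].$$ Then $$S_1^{\alpha\delta,\beta\omega}=V^{\alpha\beta}\big(V^{\delta\omega}-V^{\delta\bar x}-V^{\omega\bar x}+V^{\bar x\bar x}\big),\qquad S_2^{\alpha\delta}=V^{\alpha\alpha}\big(V^{\delta\delta}-2V^{\delta\bar x}+2V^{\bar x\bar x}-\bar V\big).$$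
   Context: $\bar x=\frac1m\sum_\nu x^\nu$ is the average token; $V^{\alpha\bar x}=\frac1n\langle x^\alpha,\bar x\rangle=\frac1m\sum_\nu V^{\alpha\nu}$, $V^{\bar x\bar x}=\frac1n\langle\bar x,\bar x\rangle$, and $\bar V=\frac1m\sum_\nu V^{\nu\nu}$. *)

theory Defs
  imports "HOL-Probability.Probability"
begin

text \<open>Rows of X: X a i for a < m (token index), i < n (feature index).\<close>

definition Vmat :: "nat \<Rightarrow> (nat \<Rightarrow> nat \<Rightarrow> real) \<Rightarrow> nat \<Rightarrow> nat \<Rightarrow> real" where
  "Vmat n X a b = (1 / real n) * (\<Sum>i<n. X a i * X b i)"

text \<open>V^{a xbar} = (1/n) <x^a, xbar>, xbar = (1/m) sum_nu x^nu\<close>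
definition Vxbar :: "nat \<Rightarrow> nat \<Rightarrow> (nat \<Rightarrow> nat \<Rightarrow> real) \<Rightarrow> nat \<Rightarrow> real" where
  "Vxbar m n X a = (1 / real m) * (\<Sum>\<nu><m. Vmat n X a \<nu>)"

definition Vxbarxbar :: "nat \<Rightarrow> nat \<Rightarrow> (nat \<Rightarrow> nat \<Rightarrow> real) \<Rightarrow> real" where
  "Vxbarxbar m n X = (1 / real m) * (\<Sum>\<nu><m. Vxbar m n X \<nu>)"

definition Vbar :: "nat \<Rightarrow> nat \<Rightarrow> (nat \<Rightarrow> nat \<Rightarrow> real) \<Rightarrow> real" where
  "Vbar m n X = (1 / real m) * (\<Sum>\<nu><m. Vmat n X \<nu> \<nu>)"

definition Yrv :: "nat \<Rightarrow> nat \<Rightarrow> (nat \<Rightarrow> nat \<Rightarrow> real) \<Rightarrow> (nat \<Rightarrow> nat \<Rightarrow> 'a \<Rightarrow> real)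
    \<Rightarrow> (nat \<Rightarrow> nat \<Rightarrow> 'a \<Rightarrow> real) \<Rightarrow> nat \<Rightarrow> nat \<Rightarrow> 'a \<Rightarrow> real" where
  "Yrv n nk X WK WQ a b w =
     (1 / real n) * (\<Sum>i<n. \<Sum>j<n. X a i * (\<Sum>k<nk. WK i k w * WQ j k w) * X b j)"

definition Ybar :: "nat \<Rightarrow> nat \<Rightarrow> nat \<Rightarrow> (nat \<Rightarrow> nat \<Rightarrow> real) \<Rightarrow> (nat \<Rightarrow> nat \<Rightarrow> 'a \<Rightarrow> real)
    \<Rightarrow> (nat \<Rightarrow> nat \<Rightarrow> 'a \<Rightarrow> real) \<Rightarrow> nat \<Rightarrow> 'a \<Rightarrow> real" where
  "Ybar m n nk X WK WQ a w = (1 / real m) * (\<Sum>\<nu><m. Yrv n nk X WK WQ a \<nu> w)"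

definition Ysqbar :: "nat \<Rightarrow> nat \<Rightarrow> nat \<Rightarrow> (nat \<Rightarrow> nat \<Rightarrow> real) \<Rightarrow> (nat \<Rightarrow> nat \<Rightarrow> 'a \<Rightarrow> real)
    \<Rightarrow> (nat \<Rightarrow> nat \<Rightarrow> 'a \<Rightarrow> real) \<Rightarrow> nat \<Rightarrow> 'a \<Rightarrow> real" where
  "Ysqbar m n nk X WK WQ a w = (1 / real m) * (\<Sum>\<nu><m. (Yrv n nk X WK WQ a \<nu> w)\<^sup>2)"

definition Wfam :: "(nat \<Rightarrow> nat \<Rightarrow> 'a \<Rightarrow> real) \<Rightarrow> (nat \<Rightarrow> nat \<Rightarrow> 'a \<Rightarrow> real)
    \<Rightarrow> (nat \<times> nat) + (nat \<times> nat) \<Rightarrow> 'a \<Rightarrow> real" where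
  "Wfam WK WQ j = (case j of Inl (i, k) \<Rightarrow> WK i k | Inr (i, k) \<Rightarrow> WQ i k)"

end

theory Submission
  imports Defs
begin

lemma gauss_mom:
  assumes D: "distributed M lborel Z (\<lambda>x. ennreal (std_normal_density x))"
  shows "integrable M (\<lambda>w. Z w ^ k)"
    and "integral\<^sup>L M (\<lambda>w. Z w ^ 1) = 0"
    and "integral\<^sup>L M (\<lambda>w. Z w ^ 2) = 1"
proof -
  show "integrable M (\<lambda>w. Z w ^ k)"
    using distributed_integrable[OF D, of "\<lambda>x. x ^ k"] integrable_std_normal_moment[of k] by simp
  show "integral\<^sup>L M (\<lambda>w. Z w ^ 1) = 0"
    using distributed_integral[OF D, of "\<lambda>x. x ^ 1"] integral_std_normal_moment_odd[of 0] by simp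
  show "integral\<^sup>L M (\<lambda>w. Z w ^ 2) = 1"
    using distributed_integral[OF D, of "\<lambda>x. x ^ 2"] integral_std_normal_moment_even[of 1] by simp
qed

lemma prod_pow_delta:
  assumes "finite J" "p \<in> J"
  shows "(\<Prod>q\<in>J. (f q :: real) ^ (if q = p then 1 else 0)) = f p"
proof -
  have "(\<Prod>q\<in>J. (f q :: real) ^ (if q = p then 1 else 0)) = (\<Prod>q\<in>J. if q = p then f q else 1)"
    by (rule prod.cong) auto
  also have "\<dots> = f p" using assms by (simp add: prod.delta)
  finally show ?thesis .
qed

lemma four_moment:
  fixes G :: "'i \<Rightarrow> 'a \<Rightarrow> real"
  assumes P: "prob_space M"
    and ind: "prob_space.indep_vars M (\<lambda>_. borel) G I"
    and D: "\<And>p. p \<in> I \<Longrightarrow> distributed M lborel (G p) (\<lambda>x. ennreal (std_normal_density x))"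
    and I: "p1 \<in> I" "p2 \<in> I" "p3 \<in> I" "p4 \<in> I"
    and ne: "p1 \<noteq> p2" "p1 \<noteq> p4" "p3 \<noteq> p2" "p3 \<noteq> p4"
  shows "has_bochner_integral M (\<lambda>w. G p1 w * G p2 w * (G p3 w * G p4 w))
           (if p1 = p3 \<and> p2 = p4 then 1 else 0)"
proof -
  interpret prob_space M by (rule P)
  define J where "J = {p1, p2, p3, p4}"
  define e where "e q = (if q = p1 then 1 else 0) + (if q = p2 then 1 else 0)
      + (if q = p3 then 1 else 0) + (if q = p4 then 1 else (0::nat))" for q
  have fJ: "finite J" and JI: "J \<subseteq> I" using I by (auto simp: J_def)
  have peq: "G p1 w * G p2 w * (G p3 w * G p4 w) = (\<Prod>q\<in>J. G q w ^ e q)" for w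
    unfolding e_def power_add prod.distrib
    using fJ by (simp add: prod_pow_delta J_def)
  have indJ: "indep_vars (\<lambda>_. borel) (\<lambda>q w. G q w ^ e q) J"
    by (rule indep_vars_compose2[OF indep_vars_subset[OF ind JI]]) auto
  have intq: "\<And>q. q \<in> J \<Longrightarrow> integrable M (\<lambda>w. G q w ^ e q)"
    using gauss_mom(1)[OF D] JI by auto
  have int: "integrable M (\<lambda>w. \<Prod>q\<in>J. G q w ^ e q)"
    by (rule indep_vars_integrable[OF fJ indJ intq])
  have val: "integral\<^sup>L M (\<lambda>w. \<Prod>q\<in>J. G q w ^ e q) = (\<Prod>q\<in>J. integral\<^sup>L M (\<lambda>w. G q w ^ e q))"
    by (rule indep_vars_lebesgue_integral[OF fJ indJ intq])
  have "(\<Prod>q\<in>J. integral\<^sup>L M (\<lambda>w. G q w ^ e q)) = (if p1 = p3 \<and> p2 = p4 then 1 else 0)"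
  proof (cases "p1 = p3 \<and> p2 = p4")
    case True
    then have "J = {p1, p2}" by (auto simp: J_def)
    moreover have "e p1 = 2" "e p2 = 2" using True ne by (auto simp: e_def)
    ultimately show ?thesis using True ne gauss_mom(3)[OF D] I by simp
  next
    case False
    then consider "p1 \<noteq> p3" | "p2 \<noteq> p4" by blast
    then show ?thesis
    proof cases
      case 1
      then have "e p1 = 1" using ne by (auto simp: e_def)
      moreover have "p1 \<in> J" by (simp add: J_def)
      ultimately show ?thesis using False fJ gauss_mom(2)[OF D[OF I(1)]]
        by (auto intro!: prod_zero bexI[of _ p1])
    next
      case 2
      then have "e p2 = 1" using ne by (auto simp: e_def)
      moreover have "p2 \<in> J" by (simp add: J_def)
      ultimately show ?thesis using False fJ gauss_mom(2)[OF D[OF I(2)]]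
        by (auto intro!: prod_zero bexI[of _ p2])
    qed
  qed
  then show ?thesis using int val peq by (simp add: has_bochner_integral_iff)
qed

lemma collapse3:
  fixes C :: "nat \<Rightarrow> nat \<Rightarrow> real" and n nk k :: nat
  assumes "i < n" "j < n" "k < nk"
  shows "(\<Sum>i'<n. \<Sum>j'<n. \<Sum>k'<nk. C i' j' * (if i = i' \<and> k = k' \<and> j = j' then 1 else 0)) = C i j"
proof -
  have "(\<Sum>i'<n. \<Sum>j'<n. \<Sum>k'<nk. C i' j' * (if i = i' \<and> k = k' \<and> j = j' then 1 else 0))
     = (\<Sum>i'<n. if i = i' then (\<Sum>j'<n. if j = j' then C i' j' else 0) else 0)"
  proof (intro sum.cong refl)
    fix i'
    show "(\<Sum>j'<n. \<Sum>k'<nk. C i' j' * (if i = i' \<and> k = k' \<and> j = j' then 1 else 0)) =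
       (if i = i' then (\<Sum>j'<n. if j = j' then C i' j' else 0) else 0)"
    proof (cases "i = i'")
      case True
      have "(\<Sum>j'<n. \<Sum>k'<nk. C i' j' * (if i = i' \<and> k = k' \<and> j = j' then 1 else 0)) =
         (\<Sum>j'<n. if j = j' then C i' j' else 0)"
      proof (intro sum.cong refl)
        fix j' show "(\<Sum>k'<nk. C i' j' * (if i = i' \<and> k = k' \<and> j = j' then 1 else 0)) = (if j = j' then C i' j' else 0)"
          using assms True by (cases "j = j'") (simp_all add: if_distrib sum.delta' cong: if_cong)
      qed
      then show ?thesis using True by simp
    qed simp
  qed
  also have "\<dots> = C i j" using assms by (simp add: sum.delta')
  finally show ?thesis .
qed
lemma triple_prod:
  "(\<Sum>i\<in>I. \<Sum>j\<in>J. \<Sum>k\<in>K. (f i j k :: real)) * (\<Sum>i\<in>I'. \<Sum>j\<in>J'. \<Sum>k\<in>K'. g i j k)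
   = (\<Sum>i\<in>I. \<Sum>j\<in>J. \<Sum>k\<in>K. \<Sum>i'\<in>I'. \<Sum>j'\<in>J'. \<Sum>k'\<in>K'. f i j k * g i' j' k')"
  by (simp only: sum_distrib_right) (simp only: sum_distrib_left)

lemma Y_alt:
  "Yrv n nk X WK WQ a b w = (1 / real n) * (\<Sum>i<n. \<Sum>j<n. \<Sum>k<nk. X a i * X b j * (WK i k w * WQ j k w))"
  unfolding Yrv_def by (simp add: sum_distrib_left sum_distrib_right mult_ac)

lemma Y_expand:
  "Yrv n nk X WK WQ a b w * Yrv n nk X WK WQ c d w =
   (1 / real n ^ 2) * (\<Sum>i<n. \<Sum>j<n. \<Sum>k<nk. \<Sum>i'<n. \<Sum>j'<n. \<Sum>k'<nk.
      (X a i * X b j * X c i' * X d j') * (WK i k w * WQ j k w * (WK i' k' w * WQ j' k' w)))"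
proof -
  have "Yrv n nk X WK WQ a b w * Yrv n nk X WK WQ c d w = (1 / real n ^ 2) * 
    ((\<Sum>i<n. \<Sum>j<n. \<Sum>k<nk. X a i * X b j * (WK i k w * WQ j k w)) *
     (\<Sum>i<n. \<Sum>j<n. \<Sum>k<nk. X c i * X d j * (WK i k w * WQ j k w)))"
    unfolding Y_alt by (simp add: power2_eq_square)
  also have "\<dots> = (1 / real n ^ 2) * (\<Sum>i<n. \<Sum>j<n. \<Sum>k<nk. \<Sum>i'<n. \<Sum>j'<n. \<Sum>k'<nk.
      (X a i * X b j * X c i' * X d j') * (WK i k w * WQ j k w * (WK i' k' w * WQ j' k' w)))"
    unfolding triple_prod by (simp add: mult_ac)
  finally show ?thesis .
qed

locale WS =
  fixes M :: "'a measure" and n nk :: nat and WK WQ :: "nat \<Rightarrow> nat \<Rightarrow> 'a \<Rightarrow> real"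
  assumes P: "prob_space M"
    and ind: "prob_space.indep_vars M (\<lambda>_. borel) (Wfam WK WQ)
           (({..<n} \<times> {..<nk}) <+> ({..<n} \<times> {..<nk}))"
    and DK: "\<And>i k. i < n \<Longrightarrow> k < nk \<Longrightarrow> distributed M lborel (WK i k) (\<lambda>x. ennreal (std_normal_density x))"
    and DQ: "\<And>i k. i < n \<Longrightarrow> k < nk \<Longrightarrow> distributed M lborel (WQ i k) (\<lambda>x. ennreal (std_normal_density x))"
begin

lemma Wmom:
  assumes "i < n" "k < nk" "i' < n" "k' < nk" "j < n" "j' < n"
  shows "has_bochner_integral M (\<lambda>w. WK i k w * WQ j k w * (WK i' k' w * WQ j' k' w))
           (if i = i' \<and> k = k' \<and> j = j' then 1 else 0)"
proof -
  have D: "distributed M lborel (Wfam WK WQ p) (\<lambda>x. ennreal (std_normal_density x))"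
    if "p \<in> ({..<n} \<times> {..<nk}) <+> ({..<n} \<times> {..<nk})" for p
    using that by (auto simp: Wfam_def intro: DK DQ)
  have "has_bochner_integral M (\<lambda>w. Wfam WK WQ (Inl (i, k)) w * Wfam WK WQ (Inr (j, k)) w *
      (Wfam WK WQ (Inl (i', k')) w * Wfam WK WQ (Inr (j', k')) w))
      (if Inl (i, k) = Inl (i', k') \<and> Inr (j, k) = Inr (j', k') then 1 else 0)"
    using four_moment[OF P ind D, of "Inl (i,k)" "Inr (j,k)" "Inl (i',k')" "Inr (j',k')"] assms
    by (auto simp: Plus_def)
  then show ?thesis by (simp add: Wfam_def) (smt (verit) has_bochner_integral_cong)
qed

lemma EYY:
  "has_bochner_integral M (\<lambda>w. Yrv n nk X WK WQ a b w * Yrv n nk X WK WQ c d w)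
     (real nk * Vmat n X a c * Vmat n X b d)"
proof -
  have HB: "has_bochner_integral M (\<lambda>w. (1 / real n ^ 2) * (\<Sum>i<n. \<Sum>j<n. \<Sum>k<nk. \<Sum>i'<n. \<Sum>j'<n. \<Sum>k'<nk.
      (X a i * X b j * X c i' * X d j') * (WK i k w * WQ j k w * (WK i' k' w * WQ j' k' w))))
    ((1 / real n ^ 2) * (\<Sum>i<n. \<Sum>j<n. \<Sum>k<nk. \<Sum>i'<n. \<Sum>j'<n. \<Sum>k'<nk.
      (X a i * X b j * X c i' * X d j') * (if i = i' \<and> k = k' \<and> j = j' then 1 else 0)))"
    by (intro has_bochner_integral_mult_right has_bochner_integral_sum Wmom) auto
  have "(\<Sum>i<n. \<Sum>j<n. \<Sum>k<nk. \<Sum>i'<n. \<Sum>j'<n. \<Sum>k'<nk.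
      (X a i * X b j * X c i' * X d j') * (if i = i' \<and> k = k' \<and> j = j' then 1 else 0))
     = (\<Sum>i<n. \<Sum>j<n. \<Sum>k<nk. X a i * X b j * X c i * X d j)"
    by (intro sum.cong refl collapse3[where C="\<lambda>i' j'. X a _ * X b _ * X c i' * X d j'"]) auto
  also have "\<dots> = real nk * (\<Sum>i<n. \<Sum>j<n. (X a i * X c i) * (X b j * X d j))"
    by (simp add: sum_distrib_left mult_ac)
  also have "\<dots> = real nk * ((\<Sum>i<n. X a i * X c i) * (\<Sum>j<n. X b j * X d j))"
    by (simp add: sum_product)
  finally have "(1 / real n ^ 2) * (\<Sum>i<n. \<Sum>j<n. \<Sum>k<nk. \<Sum>i'<n. \<Sum>j'<n. \<Sum>k'<nk.
      (X a i * X b j * X c i' * X d j') * (if i = i' \<and> k = k' \<and> j = j' then 1 else 0))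
     = real nk * Vmat n X a c * Vmat n X b d"
    by (simp add: Vmat_def power2_eq_square)
  with HB show ?thesis by (simp add: Y_expand)
qed

lemma Vsym: "Vmat n X a b = Vmat n X b a"
  unfolding Vmat_def by (simp add: mult.commute)

lemma part1:
  assumes "0 < nk"
  shows "(1 / real nk) * (LINT w|M. (Yrv n nk X WK WQ \<alpha> \<delta> w - Ybar m n nk X WK WQ \<alpha> w)
                                   * (Yrv n nk X WK WQ \<beta> \<omega> w - Ybar m n nk X WK WQ \<beta> w))
           = Vmat n X \<alpha> \<beta> * (Vmat n X \<delta> \<omega> - Vxbar m n X \<delta> - Vxbar m n X \<omega> + Vxbarxbar m n X)"
proof -
  let ?Y = "\<lambda>a b w. Yrv n nk X WK WQ a b w"
  let ?V = "Vmat n X"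
  have pw: "(?Y \<alpha> \<delta> w - Ybar m n nk X WK WQ \<alpha> w) * (?Y \<beta> \<omega> w - Ybar m n nk X WK WQ \<beta> w)
     = ?Y \<alpha> \<delta> w * ?Y \<beta> \<omega> w - (1 / real m) * (\<Sum>\<mu><m. ?Y \<alpha> \<delta> w * ?Y \<beta> \<mu> w)
       - (1 / real m) * (\<Sum>\<nu><m. ?Y \<alpha> \<nu> w * ?Y \<beta> \<omega> w)
       + (1 / real m) * (1 / real m) * (\<Sum>\<nu><m. \<Sum>\<mu><m. ?Y \<alpha> \<nu> w * ?Y \<beta> \<mu> w)" for w
  proof -
    define A where "A = ?Y \<alpha> \<delta> w"
    define B where "B = ?Y \<beta> \<omega> w"
    define S1 where "S1 = (\<Sum>\<nu><m. ?Y \<alpha> \<nu> w)"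
    define S2 where "S2 = (\<Sum>\<mu><m. ?Y \<beta> \<mu> w)"
    define c where "c = 1 / real m"
    have r: "(A - c * S1) * (B - c * S2) = A * B - c * (A * S2) - c * (S1 * B) + c * c * (S1 * S2)"
      by (simp add: algebra_simps)
    have e1: "A * S2 = (\<Sum>\<mu><m. ?Y \<alpha> \<delta> w * ?Y \<beta> \<mu> w)"
      unfolding A_def S2_def by (rule sum_distrib_left)
    have e2: "S1 * B = (\<Sum>\<nu><m. ?Y \<alpha> \<nu> w * ?Y \<beta> \<omega> w)"
      unfolding B_def S1_def by (rule sum_distrib_right)
    have e3: "S1 * S2 = (\<Sum>\<nu><m. \<Sum>\<mu><m. ?Y \<alpha> \<nu> w * ?Y \<beta> \<mu> w)"
      unfolding S1_def S2_def by (rule sum_product)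
    have y1: "Ybar m n nk X WK WQ \<alpha> w = c * S1" and y2: "Ybar m n nk X WK WQ \<beta> w = c * S2"
      unfolding Ybar_def c_def S1_def S2_def by simp_all
    note r2 = r[unfolded e1 e2 e3]
    show ?thesis using r2 unfolding y1 y2 A_def B_def c_def .
  qed
  have HB: "has_bochner_integral M (\<lambda>w. ?Y \<alpha> \<delta> w * ?Y \<beta> \<omega> w - (1 / real m) * (\<Sum>\<mu><m. ?Y \<alpha> \<delta> w * ?Y \<beta> \<mu> w)
       - (1 / real m) * (\<Sum>\<nu><m. ?Y \<alpha> \<nu> w * ?Y \<beta> \<omega> w)
       + (1 / real m) * (1 / real m) * (\<Sum>\<nu><m. \<Sum>\<mu><m. ?Y \<alpha> \<nu> w * ?Y \<beta> \<mu> w))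
     (real nk * ?V \<alpha> \<beta> * ?V \<delta> \<omega> - (1 / real m) * (\<Sum>\<mu><m. real nk * ?V \<alpha> \<beta> * ?V \<delta> \<mu>)
       - (1 / real m) * (\<Sum>\<nu><m. real nk * ?V \<alpha> \<beta> * ?V \<nu> \<omega>)
       + (1 / real m) * (1 / real m) * (\<Sum>\<nu><m. \<Sum>\<mu><m. real nk * ?V \<alpha> \<beta> * ?V \<nu> \<mu>))"
    by (intro has_bochner_integral_add has_bochner_integral_diff has_bochner_integral_mult_right
        has_bochner_integral_sum EYY)
  have "(1 / real nk) * (real nk * ?V \<alpha> \<beta> * ?V \<delta> \<omega> - (1 / real m) * (\<Sum>\<mu><m. real nk * ?V \<alpha> \<beta> * ?V \<delta> \<mu>)
       - (1 / real m) * (\<Sum>\<nu><m. real nk * ?V \<alpha> \<beta> * ?V \<nu> \<omega>)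
       + (1 / real m) * (1 / real m) * (\<Sum>\<nu><m. \<Sum>\<mu><m. real nk * ?V \<alpha> \<beta> * ?V \<nu> \<mu>))
     = ?V \<alpha> \<beta> * (?V \<delta> \<omega> - Vxbar m n X \<delta> - Vxbar m n X \<omega> + Vxbarxbar m n X)"
  proof -
    have s1: "(\<Sum>\<mu><m. real nk * ?V \<alpha> \<beta> * ?V \<delta> \<mu>) = real nk * ?V \<alpha> \<beta> * (\<Sum>\<mu><m. ?V \<delta> \<mu>)"
      by (simp add: sum_distrib_left)
    have s2: "(\<Sum>\<nu><m. real nk * ?V \<alpha> \<beta> * ?V \<nu> \<omega>) = real nk * ?V \<alpha> \<beta> * (\<Sum>\<mu><m. ?V \<omega> \<mu>)"
      by (simp add: sum_distrib_left Vsym[of _ \<omega>])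
    have s3: "(\<Sum>\<nu><m. \<Sum>\<mu><m. real nk * ?V \<alpha> \<beta> * ?V \<nu> \<mu>) = real nk * ?V \<alpha> \<beta> * (\<Sum>\<nu><m. \<Sum>\<mu><m. ?V \<nu> \<mu>)"
      by (simp add: sum_distrib_left)
    have s4: "Vxbarxbar m n X = (1 / real m) * (1 / real m) * (\<Sum>\<nu><m. \<Sum>\<mu><m. ?V \<nu> \<mu>)"
      unfolding Vxbarxbar_def Vxbar_def by (simp add: sum_distrib_left)
    show ?thesis unfolding s1 s2 s3 s4 unfolding Vxbar_def using assms by (simp add: field_simps)
  qed
  then show ?thesis using HB pw by (simp add: has_bochner_integral_integral_eq)
qed

lemma part2:
  assumes "0 < nk"
  shows "(1 / real nk) * (LINT w|M. (Yrv n nk X WK WQ \<alpha> \<delta> w - Ybar m n nk X WK WQ \<alpha> w)\<^sup>2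
                                   - (Ysqbar m n nk X WK WQ \<alpha> w - (Ybar m n nk X WK WQ \<alpha> w)\<^sup>2))
           = Vmat n X \<alpha> \<alpha> * (Vmat n X \<delta> \<delta> - 2 * Vxbar m n X \<delta> + 2 * Vxbarxbar m n X - Vbar m n X)"
proof -
  let ?Y = "\<lambda>a b w. Yrv n nk X WK WQ a b w"
  let ?V = "Vmat n X"
  have pw: "(?Y \<alpha> \<delta> w - Ybar m n nk X WK WQ \<alpha> w)\<^sup>2 - (Ysqbar m n nk X WK WQ \<alpha> w - (Ybar m n nk X WK WQ \<alpha> w)\<^sup>2)
     = ?Y \<alpha> \<delta> w * ?Y \<alpha> \<delta> w - 2 * (1 / real m) * (\<Sum>\<mu><m. ?Y \<alpha> \<delta> w * ?Y \<alpha> \<mu> w)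
       + 2 * ((1 / real m) * (1 / real m)) * (\<Sum>\<nu><m. \<Sum>\<mu><m. ?Y \<alpha> \<nu> w * ?Y \<alpha> \<mu> w)
       - (1 / real m) * (\<Sum>\<nu><m. ?Y \<alpha> \<nu> w * ?Y \<alpha> \<nu> w)" for w
  proof -
    define A where "A = ?Y \<alpha> \<delta> w"
    define S1 where "S1 = (\<Sum>\<nu><m. ?Y \<alpha> \<nu> w)"
    define Q where "Q = (\<Sum>\<nu><m. ?Y \<alpha> \<nu> w * ?Y \<alpha> \<nu> w)"
    define c where "c = 1 / real m"
    have r: "(A - c * S1)\<^sup>2 - (c * Q - (c * S1)\<^sup>2) = A * A - 2 * c * (A * S1) + 2 * (c * c) * (S1 * S1) - c * Q"
      by (simp add: algebra_simps power2_eq_square)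
    have e1: "A * S1 = (\<Sum>\<mu><m. ?Y \<alpha> \<delta> w * ?Y \<alpha> \<mu> w)"
      unfolding A_def S1_def by (rule sum_distrib_left)
    have e3: "S1 * S1 = (\<Sum>\<nu><m. \<Sum>\<mu><m. ?Y \<alpha> \<nu> w * ?Y \<alpha> \<mu> w)"
      unfolding S1_def by (rule sum_product)
    have y1: "Ybar m n nk X WK WQ \<alpha> w = c * S1" and y2: "Ysqbar m n nk X WK WQ \<alpha> w = c * Q"
      unfolding Ybar_def Ysqbar_def c_def S1_def Q_def by (simp_all add: power2_eq_square)
    note r2 = r[unfolded e1 e3]
    show ?thesis using r2 unfolding y1 y2 A_def Q_def c_def .
  qed
  have HB: "has_bochner_integral M (\<lambda>w. ?Y \<alpha> \<delta> w * ?Y \<alpha> \<delta> w - 2 * (1 / real m) * (\<Sum>\<mu><m. ?Y \<alpha> \<delta> w * ?Y \<alpha> \<mu> w)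
       + 2 * ((1 / real m) * (1 / real m)) * (\<Sum>\<nu><m. \<Sum>\<mu><m. ?Y \<alpha> \<nu> w * ?Y \<alpha> \<mu> w)
       - (1 / real m) * (\<Sum>\<nu><m. ?Y \<alpha> \<nu> w * ?Y \<alpha> \<nu> w))
     (real nk * ?V \<alpha> \<alpha> * ?V \<delta> \<delta> - 2 * (1 / real m) * (\<Sum>\<mu><m. real nk * ?V \<alpha> \<alpha> * ?V \<delta> \<mu>)
       + 2 * ((1 / real m) * (1 / real m)) * (\<Sum>\<nu><m. \<Sum>\<mu><m. real nk * ?V \<alpha> \<alpha> * ?V \<nu> \<mu>)
       - (1 / real m) * (\<Sum>\<nu><m. real nk * ?V \<alpha> \<alpha> * ?V \<nu> \<nu>))"
    by (intro has_bochner_integral_add has_bochner_integral_diff has_bochner_integral_mult_right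
        has_bochner_integral_sum EYY)
  have "(1 / real nk) * (real nk * ?V \<alpha> \<alpha> * ?V \<delta> \<delta> - 2 * (1 / real m) * (\<Sum>\<mu><m. real nk * ?V \<alpha> \<alpha> * ?V \<delta> \<mu>)
       + 2 * ((1 / real m) * (1 / real m)) * (\<Sum>\<nu><m. \<Sum>\<mu><m. real nk * ?V \<alpha> \<alpha> * ?V \<nu> \<mu>)
       - (1 / real m) * (\<Sum>\<nu><m. real nk * ?V \<alpha> \<alpha> * ?V \<nu> \<nu>))
     = ?V \<alpha> \<alpha> * (?V \<delta> \<delta> - 2 * Vxbar m n X \<delta> + 2 * Vxbarxbar m n X - Vbar m n X)"
  proof -
    have s1: "(\<Sum>\<mu><m. real nk * ?V \<alpha> \<alpha> * ?V \<delta> \<mu>) = real nk * ?V \<alpha> \<alpha> * (\<Sum>\<mu><m. ?V \<delta> \<mu>)"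
      by (simp add: sum_distrib_left)
    have s2: "(\<Sum>\<nu><m. real nk * ?V \<alpha> \<alpha> * ?V \<nu> \<nu>) = real nk * ?V \<alpha> \<alpha> * (\<Sum>\<nu><m. ?V \<nu> \<nu>)"
      by (simp add: sum_distrib_left)
    have s3: "(\<Sum>\<nu><m. \<Sum>\<mu><m. real nk * ?V \<alpha> \<alpha> * ?V \<nu> \<mu>) = real nk * ?V \<alpha> \<alpha> * (\<Sum>\<nu><m. \<Sum>\<mu><m. ?V \<nu> \<mu>)"
      by (simp add: sum_distrib_left)
    have s4: "Vxbarxbar m n X = (1 / real m) * (1 / real m) * (\<Sum>\<nu><m. \<Sum>\<mu><m. ?V \<nu> \<mu>)"
      unfolding Vxbarxbar_def Vxbar_def by (simp add: sum_distrib_left)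
    show ?thesis unfolding s1 s2 s3 s4 unfolding Vxbar_def Vbar_def using assms by (simp add: field_simps)
  qed
  then show ?thesis using HB pw by (simp add: has_bochner_integral_integral_eq)
qed

end

theorem lemmaC2:
  fixes M :: "'a measure" and m n nk :: nat
    and X :: "nat \<Rightarrow> nat \<Rightarrow> real"
    and WK WQ :: "nat \<Rightarrow> nat \<Rightarrow> 'a \<Rightarrow> real"
    and \<alpha> \<delta> \<beta> \<omega> :: nat
  assumes "prob_space M"
    and "0 < m" and "0 < n" and "0 < nk"
    and "prob_space.indep_vars M (\<lambda>_. borel) (Wfam WK WQ)
           (({..<n} \<times> {..<nk}) <+> ({..<n} \<times> {..<nk}))"
    and "\<And>i k. i < n \<Longrightarrow> k < nk \<Longrightarrow> distributed M lborel (WK i k) (\<lambda>x. ennreal (std_normal_density x))"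
    and "\<And>i k. i < n \<Longrightarrow> k < nk \<Longrightarrow> distributed M lborel (WQ i k) (\<lambda>x. ennreal (std_normal_density x))"
    and "\<alpha> < m" and "\<delta> < m" and "\<beta> < m" and "\<omega> < m"
  shows "((1 / real nk) * (LINT w|M. (Yrv n nk X WK WQ \<alpha> \<delta> w - Ybar m n nk X WK WQ \<alpha> w)
                                   * (Yrv n nk X WK WQ \<beta> \<omega> w - Ybar m n nk X WK WQ \<beta> w))
           = Vmat n X \<alpha> \<beta> * (Vmat n X \<delta> \<omega> - Vxbar m n X \<delta> - Vxbar m n X \<omega> + Vxbarxbar m n X))
         \<and> ((1 / real nk) * (LINT w|M. (Yrv n nk X WK WQ \<alpha> \<delta> w - Ybar m n nk X WK WQ \<alpha> w)\<^sup>2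
                                   - (Ysqbar m n nk X WK WQ \<alpha> w - (Ybar m n nk X WK WQ \<alpha> w)\<^sup>2))
           = Vmat n X \<alpha> \<alpha> * (Vmat n X \<delta> \<delta> - 2 * Vxbar m n X \<delta> + 2 * Vxbarxbar m n X - Vbar m n X))"
proof -
  interpret WS M n nk WK WQ
    by (rule WS.intro[OF assms(1) assms(5) assms(6) assms(7)])
  show ?thesis by (rule conjI[OF part1[OF assms(4)] part2[OF assms(4)]])
qed

end
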